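(* Let $q\ge 4$. Every twisted cubic of $\mathrm{PG}(U_1)$ that is contained in $\mathcal O_1$ is of the form $\theta(L)$ for some $q$-order subline $L$ of $\mathrm{PG}(1,q^3)$.
   Context: $q$ is a prime power. Let $U_1\subset\mathbb F_{q^3}^8$ be the set of vectors $(a,b^{q^2},b^{q},c,b,c^{q},c^{q^2},d)$ with $a,d\in\mathbb F_q$, $b,c\in\mathbb F_{q^3}$; it is an $8$-dimensional $\mathbb F_q$-vector space, so $\mathrm{PG}(U_1)\cong\mathrm{PG}(7,q)$. For $(a,b,c,d)\ne 0$ let $P(a,b,c,d)$ be the point of $\mathrm{PG}(U_1)$ spanned by this vector. Let $\mathcal O_1=\{P(1,t,t^{q^2+q},t^{q^2+q+1}) : t\in\mathbb F_{q^3}\}\cup\{P(0,0,0,1)\}$. Let $\theta:\mathrm{PG}(1,q^3)\to\mathcal O_1$ be the bijection $\langle(1,t)\rangle\mapsto P(1,t,t^{q^2+q},t^{q^2+q+1})$, $\langle(0,1)\rangle\mapsto P(0,0,0,1)$. A $q$-order subline of $\mathrm{PG}(1,q^3)$ is the image of $\mathrm{PG}(1,q)=\{\langle(1,t)\rangle:t\in\mathbb F_q\}\cup\{\langle(0,1)\rangle\}$ under an element of $\mathrm{PGL}(2,q^3)$. *)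

theory Defs
  imports "HOL-Computational_Algebra.Primes"
begin

text \<open>The field F_{q^3} is a finite field type 'a with CARD('a) = q^3; the subfield
 F_q is the fixed field of the q-Frobenius.  Vectors of F_{q^3}^8 are represented as
 functions nat => 'a, with coordinates 0..7 (and 0 elsewhere).\<close>

definition Fq :: "nat \<Rightarrow> ('a::field) set" where
  "Fq q = {x. x ^ q = x}"

definition vecU :: "nat \<Rightarrow> 'a::field \<Rightarrow> 'a \<Rightarrow> 'a \<Rightarrow> 'a \<Rightarrow> nat \<Rightarrow> 'a" where
  "vecU q a b c d = (\<lambda>i. if i < 8
      then [a, b ^ (q^2), b ^ q, c, b, c ^ q, c ^ (q^2), d] ! i else 0)"

definition U1 :: "nat \<Rightarrow> (nat \<Rightarrow> 'a::field) set" where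
  "U1 q = {vecU q a b c d | a b c d. a \<in> Fq q \<and> d \<in> Fq q}"

definition pt :: "nat \<Rightarrow> (nat \<Rightarrow> 'a::field) \<Rightarrow> (nat \<Rightarrow> 'a) set" where
  "pt q v = {(\<lambda>i. l * v i) | l. l \<in> Fq q}"

definition PG_U1 :: "nat \<Rightarrow> (nat \<Rightarrow> 'a::field) set set" where
  "PG_U1 q = {pt q v | v. v \<in> U1 q \<and> v \<noteq> (\<lambda>i. 0)}"

definition Ppt :: "nat \<Rightarrow> 'a::field \<Rightarrow> 'a \<Rightarrow> 'a \<Rightarrow> 'a \<Rightarrow> (nat \<Rightarrow> 'a) set" where
  "Ppt q a b c d = pt q (vecU q a b c d)"

definition O1 :: "nat \<Rightarrow> (nat \<Rightarrow> 'a::field) set set" where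
  "O1 q = {Ppt q 1 t (t ^ (q^2 + q)) (t ^ (q^2 + q + 1)) | t. True} \<union> {Ppt q 0 0 0 1}"

definition twisted_cubic :: "nat \<Rightarrow> (nat \<Rightarrow> 'a::field) set set \<Rightarrow> bool" where
  "twisted_cubic q C \<longleftrightarrow> (\<exists>e0 e1 e2 e3.
      e0 \<in> U1 q \<and> e1 \<in> U1 q \<and> e2 \<in> U1 q \<and> e3 \<in> U1 q \<and>
      (\<forall>c0 c1 c2 c3. c0 \<in> Fq q \<and> c1 \<in> Fq q \<and> c2 \<in> Fq q \<and> c3 \<in> Fq q \<and>
          (\<forall>i. c0 * e0 i + c1 * e1 i + c2 * e2 i + c3 * e3 i = 0)
          \<longrightarrow> c0 = 0 \<and> c1 = 0 \<and> c2 = 0 \<and> c3 = 0) \<and>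
      C = {pt q (\<lambda>i. s^3 * e0 i + s^2 * t * e1 i + s * t^2 * e2 i + t^3 * e3 i) | s t.
             s \<in> Fq q \<and> t \<in> Fq q \<and> (s, t) \<noteq> (0, 0)})"

definition pt1 :: "'a::field \<times> 'a \<Rightarrow> ('a \<times> 'a) set" where
  "pt1 v = {(m * fst v, m * snd v) | m. True}"

definition PG1_q :: "nat \<Rightarrow> ('a::field \<times> 'a) set set" where
  "PG1_q q = {pt1 (1, t) | t. t \<in> Fq q} \<union> {pt1 (0, 1)}"

definition subline :: "nat \<Rightarrow> ('a::field \<times> 'a) set set \<Rightarrow> bool" where
  "subline q L \<longleftrightarrow> (\<exists>al be ga de. al * de - be * ga \<noteq> 0 \<and>
      L = {pt1 (al * x + be * y, ga * x + de * y) | x y.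
             pt1 (x, y) \<in> PG1_q q \<and> (x, y) \<noteq> (0, 0)})"

definition theta :: "nat \<Rightarrow> ('a::field \<times> 'a) set \<Rightarrow> (nat \<Rightarrow> 'a) set" where
  "theta q X = (if X = pt1 (0, 1) then Ppt q 0 0 0 1
      else (let t = (THE t. X = pt1 (1, t)) in
            Ppt q 1 t (t ^ (q^2 + q)) (t ^ (q^2 + q + 1))))"

end

theory Submission
  imports Defs "HOL-Number_Theory.Residues" "HOL-Computational_Algebra.Polynomial"
begin

lemma field_power_card_same:
  fixes x :: "'a :: {field,finite}"
  shows "x ^ card (UNIV :: 'a set) = x"
proof (cases "x = 0")
  case False
  have "x * (\<Prod>y\<in>UNIV-{0}. x * y) = x * x ^ (card (UNIV :: 'a set) - 1) * \<Prod>(UNIV-{0})"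
    by (simp add: prod.distrib mult_ac)
  also have "x * x ^ (card (UNIV :: 'a set) - 1) = x ^ Suc (card (UNIV :: 'a set) - 1)"
    by (subst power_Suc) auto
  also have "Suc (card (UNIV :: 'a set) - 1) = card (UNIV :: 'a set)"
    using finite_UNIV_card_ge_0[where ?'a = 'a] by simp
  also have "(\<Prod>y\<in>UNIV-{0}. x * y) = (\<Prod>y\<in>UNIV-{0}. y)"
    by (rule prod.reindex_bij_witness[of _ "\<lambda>y. y / x" "\<lambda>y. x * y"]) (use False in auto)
  finally show ?thesis
    by simp
qed (use finite_UNIV_card_ge_0[where ?'a = 'a] in auto)

lemma char_setup:
  fixes q :: nat
  assumes "prime p" "k > 0" "q = p ^ k" "card (UNIV :: 'a::{field,finite} set) = q ^ 3"
  shows "CHAR('a) = p"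
proof -
  have pos: "CHAR('a) > 0" by (rule finite_imp_CHAR_pos) simp
  have pr: "prime CHAR('a)" using prime_CHAR_semidom[OF pos] .
  have "CHAR('a) dvd card (UNIV :: 'a set)" by (rule CHAR_dvd_CARD)
  hence "CHAR('a) dvd p ^ (k*3)" using assms by (simp add: power_mult)
  hence "CHAR('a) dvd p" using pr prime_dvd_power by blast
  thus ?thesis using pr assms(1) primes_dvd_imp_eq by blast
qed

lemma frob_add:
  fixes q :: nat
  assumes "prime p" "k > 0" "q = p ^ k" "card (UNIV :: 'a::{field,finite} set) = q ^ 3"
  shows "(x + y :: 'a) ^ q = x ^ q + y ^ q"
proof -
  have c: "CHAR('a) = p" using char_setup[OF assms] .
  show ?thesis by (rule freshmans_dream') (use c assms in auto)
qed

definition Dt :: "'a::field \<times> 'a \<Rightarrow> 'a \<times> 'a \<Rightarrow> 'a" where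
  "Dt a z = fst a * snd z - snd a * fst z"

definition Vh :: "nat \<Rightarrow> 'a::field \<times> 'a \<Rightarrow> nat \<Rightarrow> 'a" where
  "Vh q z = vecU q (fst z * fst z ^ q * (fst z ^ q) ^ q) (snd z * fst z ^ q * (fst z ^ q) ^ q)
      (fst z * snd z ^ q * (snd z ^ q) ^ q) (snd z * snd z ^ q * (snd z ^ q) ^ q)"

locale frob =
  fixes q :: nat and sg :: "'a::field \<Rightarrow> 'a"
  assumes sg_def: "sg x = x ^ q"
    and pw_add: "(x + y) ^ q = x ^ q + y ^ q"
    and pw3: "((x ^ q) ^ q) ^ q = x"
    and qpos: "q > 0"
begin

lemma pw_0[simp]: "(0::'a) ^ q = 0" using qpos by simp
lemma pw_diff: "(x - y :: 'a) ^ q = x ^ q - y ^ q"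
proof -
  have "x ^ q = ((x - y) + y) ^ q" by simp
  also have "\<dots> = (x - y) ^ q + y ^ q" by (rule pw_add)
  finally show ?thesis by simp
qed
lemma pw_neg: "(- x :: 'a) ^ q = - (x ^ q)"
  using pw_diff[of 0 x] by simp
lemma pw_eq0[simp]: "((x::'a) ^ q = 0) \<longleftrightarrow> x = 0" using qpos by simp
lemma pq2: "(x::'a) ^ (q^2) = (x ^ q) ^ q" by (simp add: power2_eq_square power_mult)
lemma pqq: "(x::'a) ^ (q*q) = (x ^ q) ^ q" by (simp add: power_mult)
lemma pw4: "((((x::'a) ^ q) ^ q) ^ q) ^ q = x ^ q" using pw3 by simp

lemma Fq_iff: "x \<in> Fq q \<longleftrightarrow> (x::'a) ^ q = x" by (simp add: Fq_def)
lemma Fq_0[simp]: "(0::'a) \<in> Fq q" by (simp add: Fq_iff)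
lemma Fq_1[simp]: "(1::'a) \<in> Fq q" by (simp add: Fq_iff)
lemma Fq_add: "x \<in> Fq q \<Longrightarrow> y \<in> Fq q \<Longrightarrow> (x + y :: 'a) \<in> Fq q" by (simp add: Fq_iff pw_add)
lemma Fq_diff: "x \<in> Fq q \<Longrightarrow> y \<in> Fq q \<Longrightarrow> (x - y :: 'a) \<in> Fq q" by (simp add: Fq_iff pw_diff)
lemma Fq_mult: "x \<in> Fq q \<Longrightarrow> y \<in> Fq q \<Longrightarrow> (x * y :: 'a) \<in> Fq q" by (simp add: Fq_iff power_mult_distrib)
lemma Fq_div: "x \<in> Fq q \<Longrightarrow> y \<in> Fq q \<Longrightarrow> (x / y :: 'a) \<in> Fq q" by (simp add: Fq_iff power_divide)
lemma Fq_pow: "x \<in> Fq q \<Longrightarrow> (x :: 'a) ^ n \<in> Fq q" by (simp add: Fq_iff flip: power_mult) (metis mult.commute power_mult)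

lemma Vh_coords:
  fixes z :: "'a \<times> 'a"
  shows "Vh q z 0 = fst z * fst z ^ q * (fst z ^ q) ^ q"
    "Vh q z 1 = fst z * fst z ^ q * (snd z ^ q) ^ q"
    "Vh q z 2 = fst z * snd z ^ q * (fst z ^ q) ^ q"
    "Vh q z 3 = fst z * snd z ^ q * (snd z ^ q) ^ q"
    "Vh q z 4 = snd z * fst z ^ q * (fst z ^ q) ^ q"
    "Vh q z 5 = snd z * fst z ^ q * (snd z ^ q) ^ q"
    "Vh q z 6 = snd z * snd z ^ q * (fst z ^ q) ^ q"
    "Vh q z 7 = snd z * snd z ^ q * (snd z ^ q) ^ q"
  by (simp_all add: Vh_def vecU_def pq2 pqq power_mult_distrib pw3 pw4 mult_ac numeral_eq_Suc)

definition fz :: "'a \<times> 'a \<Rightarrow> 'a \<times> 'a \<Rightarrow> 'a \<times> 'a \<Rightarrow> 'a \<times> 'a \<Rightarrow> 'a" where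
  "fz al be ga z = Dt al z * (Dt be z) ^ q * ((Dt ga z) ^ q) ^ q"

lemma fz_expand:
  "fz al be ga z =
     - (snd al * snd be ^ q * (snd ga ^ q) ^ q) * Vh q z 0
     + snd al * snd be ^ q * (fst ga ^ q) ^ q * Vh q z 1
     + snd al * fst be ^ q * (snd ga ^ q) ^ q * Vh q z 2
     - snd al * fst be ^ q * (fst ga ^ q) ^ q * Vh q z 3
     + fst al * snd be ^ q * (snd ga ^ q) ^ q * Vh q z 4
     - fst al * snd be ^ q * (fst ga ^ q) ^ q * Vh q z 5
     - fst al * fst be ^ q * (snd ga ^ q) ^ q * Vh q z 6
     + fst al * fst be ^ q * (fst ga ^ q) ^ q * Vh q z 7"
  unfolding fz_def Dt_def Vh_coords by (simp add: pw_diff power_mult_distrib algebra_simps)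

lemma keyR:
  fixes l1 l2 l3 l4 l5 :: 'a and z1 z2 z3 z4 z5 :: "'a \<times> 'a"
  assumes rel: "\<And>k. l1 * Vh q z1 k + l2 * Vh q z2 k + l3 * Vh q z3 k + l4 * Vh q z4 k + l5 * Vh q z5 k = 0"
  shows "l1 * fz al be ga z1 + l2 * fz al be ga z2 + l3 * fz al be ga z3 + l4 * fz al be ga z4
     + l5 * fz al be ga z5 = 0"
proof -
  note r = rel[of 0] rel[of 1] rel[of 2] rel[of 3] rel[of 4] rel[of 5] rel[of 6] rel[of 7]
  define c0 where "c0 = - (snd al * snd be ^ q * (snd ga ^ q) ^ q)"
  define c1 where "c1 = snd al * snd be ^ q * (fst ga ^ q) ^ q"
  define c2 where "c2 = snd al * fst be ^ q * (snd ga ^ q) ^ q"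
  define c3 where "c3 = - (snd al * fst be ^ q * (fst ga ^ q) ^ q)"
  define c4 where "c4 = fst al * snd be ^ q * (snd ga ^ q) ^ q"
  define c5 where "c5 = - (fst al * snd be ^ q * (fst ga ^ q) ^ q)"
  define c6 where "c6 = - (fst al * fst be ^ q * (snd ga ^ q) ^ q)"
  define c7 where "c7 = fst al * fst be ^ q * (fst ga ^ q) ^ q"
  have e: "fz al be ga z = c0 * Vh q z 0 + c1 * Vh q z 1 + c2 * Vh q z 2 + c3 * Vh q z 3 +
     c4 * Vh q z 4 + c5 * Vh q z 5 + c6 * Vh q z 6 + c7 * Vh q z 7" for z
    unfolding fz_expand c0_def c1_def c2_def c3_def c4_def c5_def c6_def c7_def by simp
  have "l1 * fz al be ga z1 + l2 * fz al be ga z2 + l3 * fz al be ga z3 + l4 * fz al be ga z4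
     + l5 * fz al be ga z5 =
     c0 * (l1 * Vh q z1 0 + l2 * Vh q z2 0 + l3 * Vh q z3 0 + l4 * Vh q z4 0 + l5 * Vh q z5 0) +
     c1 * (l1 * Vh q z1 1 + l2 * Vh q z2 1 + l3 * Vh q z3 1 + l4 * Vh q z4 1 + l5 * Vh q z5 1) +
     c2 * (l1 * Vh q z1 2 + l2 * Vh q z2 2 + l3 * Vh q z3 2 + l4 * Vh q z4 2 + l5 * Vh q z5 2) +
     c3 * (l1 * Vh q z1 3 + l2 * Vh q z2 3 + l3 * Vh q z3 3 + l4 * Vh q z4 3 + l5 * Vh q z5 3) +
     c4 * (l1 * Vh q z1 4 + l2 * Vh q z2 4 + l3 * Vh q z3 4 + l4 * Vh q z4 4 + l5 * Vh q z5 4) +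
     c5 * (l1 * Vh q z1 5 + l2 * Vh q z2 5 + l3 * Vh q z3 5 + l4 * Vh q z4 5 + l5 * Vh q z5 5) +
     c6 * (l1 * Vh q z1 6 + l2 * Vh q z2 6 + l3 * Vh q z3 6 + l4 * Vh q z4 6 + l5 * Vh q z5 6) +
     c7 * (l1 * Vh q z1 7 + l2 * Vh q z2 7 + l3 * Vh q z3 7 + l4 * Vh q z4 7 + l5 * Vh q z5 7)"
    unfolding e by (simp add: algebra_simps)
  also have "\<dots> = 0" using r by simp
  finally show ?thesis .
qed

lemma Dt_self[simp]: "Dt z z = 0" by (simp add: Dt_def mult.commute)

lemma cr_lemma:
  fixes l1 l2 l3 l4 l5 :: 'a and z1 z2 z3 z4 z5 :: "'a \<times> 'a"
  assumes rel: "\<And>k. l1 * Vh q z1 k + l2 * Vh q z2 k + l3 * Vh q z3 k + l4 * Vh q z4 k + l5 * Vh q z5 k = 0"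
    and nz: "l3 \<noteq> 0" "Dt z5 z3 \<noteq> 0" "Dt z2 z3 \<noteq> 0" "Dt z1 z4 \<noteq> 0"
  shows "(Dt z1 z3 * Dt z2 z4) / (Dt z2 z3 * Dt z1 z4) \<in> Fq q"
proof -
  have E1: "l3 * fz z1 z2 z5 z3 + l4 * fz z1 z2 z5 z4 = 0"
    using keyR[OF rel, of z1 z2 z5] by (simp add: fz_def)
  have E2: "l3 * fz z2 z1 z5 z3 + l4 * fz z2 z1 z5 z4 = 0"
    using keyR[OF rel, of z2 z1 z5] by (simp add: fz_def)
  define A where "A = Dt z1 z3 * Dt z2 z4"
  define B where "B = Dt z2 z3 * Dt z1 z4"
  define Z3 where "Z3 = (Dt z5 z3 ^ q) ^ q"
  have Z3: "Z3 \<noteq> 0" using nz unfolding Z3_def by simp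
  have "(l3 * fz z1 z2 z5 z3 + l4 * fz z1 z2 z5 z4) * (Dt z2 z4 * Dt z1 z4 ^ q)
      - (l3 * fz z2 z1 z5 z3 + l4 * fz z2 z1 z5 z4) * (Dt z1 z4 * Dt z2 z4 ^ q)
      = l3 * Z3 * (A * B ^ q - B * A ^ q)"
    unfolding fz_def A_def B_def Z3_def by (simp add: power_mult_distrib algebra_simps)
  hence "l3 * Z3 * (A * B ^ q - B * A ^ q) = 0" using E1 E2 by simp
  hence ab: "A * B ^ q = B * A ^ q" using nz Z3 by simp
  have B: "B \<noteq> 0" using nz unfolding B_def by simp
  have "(A / B) ^ q = A / B" using ab B by (simp add: power_divide field_simps)
  thus ?thesis unfolding A_def B_def Fq_iff .
qed

end

lemma card_Fq_ge:
  fixes q :: nat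
  assumes card: "card (UNIV :: 'a::{field,finite} set) = q^3" and q2: "q \<ge> 2"
  shows "q \<le> card (Fq q :: 'a set)"
proof -
  obtain r where r: "q = Suc r" "r \<ge> 1" using q2 by (cases q) auto
  have xq3: "x^(q^3) = x" for x::'a using field_power_card_same[of x] card by simp
  define m where "m = Suc (q^2 + q)"
  have qm: "(q-1)*m = q^3 - 1" unfolding m_def r
    by (simp add: power3_eq_cube power2_eq_square algebra_simps)
  define g :: "'a poly" where "g = (\<Sum>i<m. monom 1 ((q-1)*i))"
  have pg: "poly g x = (\<Sum>i<m. (x^(q-1))^i)" for x
    by (simp add: g_def poly_sum poly_monom power_mult)
  have dg: "degree g \<le> (q-1)*(m-1)" unfolding g_def
    by (rule degree_sum_le) (auto intro!: order.trans[OF degree_monom_le] mult_le_mono2)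
  have z0: "(0::'a)^(q-1) = 0" using r by simp
  have "poly g 0 = 1" unfolding pg m_def z0
    by (simp add: sum.lessThan_Suc_shift del: sum.lessThan_Suc)
  hence g0: "g \<noteq> 0" by auto
  define R1 where "R1 = {x::'a. x \<noteq> 0 \<and> x^(q-1) = 1}"
  define R2 where "R2 = {x::'a. poly g x = 0}"
  have cover: "UNIV - {0} \<subseteq> R1 \<union> R2"
  proof
    fix x :: 'a assume "x \<in> UNIV - {0}"
    hence x0: "x \<noteq> 0" by simp
    have "x * x^(q^3-1) = x^(q^3)" using r by (simp flip: power_Suc)
    hence "x * x^(q^3-1) = x * 1" using xq3 by simp
    hence "x^(q^3-1) = 1" using x0 by (metis mult_left_cancel)
    moreover have "(x^(q-1))^m = x^(q^3-1)" by (simp only: power_mult[symmetric] qm)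
    ultimately have "(x^(q-1))^m - 1 = 0" by simp
    hence "(x^(q-1) - 1) * poly g x = 0" by (simp add: pg power_diff_1_eq)
    thus "x \<in> R1 \<union> R2" using x0 unfolding R1_def R2_def by auto
  qed
  have "q^3 - 1 = card (UNIV - {0::'a})" using card by (simp add: card_Diff_singleton)
  also have "\<dots> \<le> card (R1 \<union> R2)" by (rule card_mono[OF _ cover]) simp
  also have "\<dots> \<le> card R1 + card R2" by (rule card_Un_le)
  also have "card R2 \<le> (q-1)*(m-1)" unfolding R2_def using card_poly_roots_bound[OF g0] dg by linarith
  finally have "q^3 - 1 \<le> card R1 + (q-1)*(m-1)" by simp
  hence c1: "r \<le> card R1" unfolding r m_def
    by (simp add: power3_eq_cube power2_eq_square algebra_simps)
  have sub: "insert 0 R1 \<subseteq> Fq q"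
  proof
    fix x assume "x \<in> insert 0 R1"
    thus "x \<in> Fq q"
    proof
      assume "x \<in> R1"
      hence "x^(q-1) = 1" unfolding R1_def by simp
      hence "x^q = x" using r by (simp)
      thus ?thesis by (simp add: Fq_def)
    qed (use r in \<open>simp add: Fq_def\<close>)
  qed
  have "card (insert 0 R1) = Suc (card R1)" by (simp add: R1_def)
  hence "q \<le> card (insert 0 R1)" using c1 r by simp
  also have "\<dots> \<le> card (Fq q :: 'a set)" by (rule card_mono[OF _ sub]) simp
  finally show ?thesis .
qed

context frob
begin

lemma pt_self: "v \<in> pt q (v :: nat \<Rightarrow> 'a)"
  unfolding pt_def by (rule CollectI, rule exI[of _ 1]) simp

lemma pt_eqD: "pt q v = pt q w \<Longrightarrow> \<exists>l\<in>Fq q. v = (\<lambda>i. l * (w :: nat \<Rightarrow> 'a) i)"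
  using pt_self[of v] unfolding pt_def by auto

lemma pt_scale:
  assumes "l \<in> Fq q" "l \<noteq> 0"
  shows "pt q (\<lambda>i. l * (v :: nat \<Rightarrow> 'a) i) = pt q v"
proof
  show "pt q (\<lambda>i. l * v i) \<subseteq> pt q v"
  proof
    fix x assume "x \<in> pt q (\<lambda>i. l * v i)"
    then obtain m where m: "m \<in> Fq q" "x = (\<lambda>i. m * (l * v i))" unfolding pt_def by auto
    hence "x = (\<lambda>i. (m * l) * v i)" by (simp add: mult.assoc)
    moreover have "m * l \<in> Fq q" using m assms Fq_mult by blast
    ultimately show "x \<in> pt q v" unfolding pt_def by blast
  qed
next
  show "pt q v \<subseteq> pt q (\<lambda>i. l * v i)"
  proof
    fix x assume "x \<in> pt q v"
    then obtain m where m: "m \<in> Fq q" "x = (\<lambda>i. m * v i)" unfolding pt_def by auto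
    hence "x = (\<lambda>i. (m / l) * (l * v i))" using assms by (simp add: field_simps)
    moreover have "m / l \<in> Fq q" using m assms Fq_div by blast
    ultimately show "x \<in> pt q (\<lambda>i. l * v i)" unfolding pt_def by blast
  qed
qed

lemma Ppt_Vh1: "Ppt q 1 u (u ^ (q^2 + q)) (u ^ (q^2 + q + 1)) = pt q (Vh q ((1::'a), u))"
  by (simp add: Ppt_def Vh_def power_add pq2 mult_ac)

lemma Ppt_Vh0: "Ppt q 0 0 0 1 = pt q (Vh q ((0::'a), 1))"
  by (simp add: Ppt_def Vh_def)

end

lemma pt1_self: "v \<in> pt1 v"
  unfolding pt1_def by (rule CollectI, rule exI[of _ 1]) simp

lemma pt1_scale:
  fixes m :: "'a::field"
  assumes "m \<noteq> 0"
  shows "pt1 (m * a, m * b) = pt1 (a, b)"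
proof
  show "pt1 (m * a, m * b) \<subseteq> pt1 (a, b)"
  proof
    fix x assume "x \<in> pt1 (m * a, m * b)"
    then obtain n where "x = (n * (m * a), n * (m * b))" unfolding pt1_def by auto
    hence "x = ((n * m) * a, (n * m) * b)" by (simp add: mult.assoc)
    thus "x \<in> pt1 (a, b)" unfolding pt1_def by auto
  qed
  show "pt1 (a, b) \<subseteq> pt1 (m * a, m * b)"
  proof
    fix x assume "x \<in> pt1 (a, b)"
    then obtain n where "x = (n * a, n * b)" unfolding pt1_def by auto
    hence "x = ((n / m) * (m * a), (n / m) * (m * b))" using assms by simp
    thus "x \<in> pt1 (m * a, m * b)" unfolding pt1_def by (simp only: fst_conv snd_conv) blast
  qed
qed

lemma pt1_10_01: "pt1 ((1::'a::field), u) \<noteq> pt1 (0, 1)"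
proof
  assume "pt1 ((1::'a), u) = pt1 (0, 1)"
  hence "(1, u) \<in> pt1 ((0::'a), 1)" using pt1_self by metis
  thus False unfolding pt1_def by auto
qed

lemma pt1_the: "(THE t. pt1 ((1::'a::field), u) = pt1 (1, t)) = u"
proof (rule the_equality)
  fix t assume "pt1 ((1::'a), u) = pt1 (1, t)"
  hence "(1, u) \<in> pt1 ((1::'a), t)" using pt1_self by metis
  thus "t = u" unfolding pt1_def by auto
qed simp

context frob
begin

lemma theta_Vh:
  assumes "z = (0, 1) \<or> fst z = (1::'a)"
  shows "theta q (pt1 z) = pt q (Vh q z)"
proof (cases "z = (0,1)")
  case True
  thus ?thesis by (simp add: theta_def Ppt_Vh0)
next
  case False
  then obtain u where z: "z = (1, u)" using assms by (cases z) auto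
  have "theta q (pt1 z) = Ppt q 1 u (u ^ (q^2 + q)) (u ^ (q^2 + q + 1))"
    unfolding z theta_def using pt1_10_01[of u] by (simp only: if_False Let_def pt1_the)
  thus ?thesis using Ppt_Vh1 z by simp
qed

definition Lm :: "'a \<Rightarrow> 'a \<Rightarrow> 'a \<Rightarrow> 'a \<Rightarrow> ('a \<times> 'a) set set" where
  "Lm al be ga de = {pt1 (al * x + be * y, ga * x + de * y) | x y.
             pt1 (x, y) \<in> PG1_q q \<and> (x, y) \<noteq> (0, 0)}"

lemma subline_Lm: "al * de - be * ga \<noteq> 0 \<Longrightarrow> subline q (Lm al be ga de)"
  unfolding subline_def Lm_def by blast

lemma PG1_10: "pt1 ((1::'a), 0) \<in> PG1_q q"
  unfolding PG1_q_def by auto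

lemma PG1_r1: "r \<in> Fq q \<Longrightarrow> pt1 (r, (1::'a)) \<in> PG1_q q"
proof (cases "r = 0")
  case False
  assume r: "r \<in> Fq q"
  have "pt1 (r, 1) = pt1 (r * 1, r * (1 / r))" using False by simp
  also have "\<dots> = pt1 (1, 1/r)" by (rule pt1_scale[OF False])
  finally show ?thesis unfolding PG1_q_def using Fq_div[OF Fq_1 r] by auto
qed (auto simp: PG1_q_def)

lemma inL:
  fixes z1 z2 z3 z :: "'a \<times> 'a"
  defines "c1 \<equiv> Dt z3 z2 / Dt z1 z2" and "c2 \<equiv> Dt z1 z3 / Dt z1 z2"
  assumes d12: "Dt z1 z2 \<noteq> 0" and d13: "Dt z1 z3 \<noteq> 0" and d32: "Dt z3 z2 \<noteq> 0"
    and zn: "z \<noteq> (0, 0)"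
    and h: "Dt z1 z = 0 \<or> (Dt z1 z3 * Dt z2 z) / (Dt z2 z3 * Dt z1 z) \<in> Fq q"
  shows "pt1 z \<in> Lm (c1 * fst z1) (c2 * fst z2) (c1 * snd z1) (c2 * snd z2)"
proof -
  obtain a0 a1 where z1: "z1 = (a0, a1)" by (cases z1)
  obtain b0 b1 where z2: "z2 = (b0, b1)" by (cases z2)
  obtain g0 g1 where z3: "z3 = (g0, g1)" by (cases z3)
  obtain x0 x1 where z: "z = (x0, x1)" by (cases z)
  define a where "a = Dt z z2 / Dt z1 z2"
  define b where "b = Dt z1 z / Dt z1 z2"
  have c1: "c1 \<noteq> 0" and c2: "c2 \<noteq> 0" using d12 d13 d32 by (auto simp: c1_def c2_def)
  have i0: "Dt z z2 * a0 + Dt z1 z * b0 = x0 * Dt z1 z2"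
    and i1: "Dt z z2 * a1 + Dt z1 z * b1 = x1 * Dt z1 z2"
    by (simp_all add: Dt_def z1 z2 z algebra_simps)
  have za0: "x0 = a * a0 + b * b0"
  proof -
    have "a * a0 + b * b0 = (Dt z z2 * a0 + Dt z1 z * b0) / Dt z1 z2"
      by (simp add: a_def b_def add_divide_distrib)
    thus ?thesis using i0 d12 by simp
  qed
  have za1: "x1 = a * a1 + b * b1"
  proof -
    have "a * a1 + b * b1 = (Dt z z2 * a1 + Dt z1 z * b1) / Dt z1 z2"
      by (simp add: a_def b_def add_divide_distrib)
    thus ?thesis using i1 d12 by simp
  qed
  show ?thesis
  proof (cases "Dt z1 z = 0")
    case True
    hence b0: "b = 0" by (simp add: b_def)
    hence a0: "a \<noteq> 0" using zn za0 za1 z by auto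
    have "pt1 z = pt1 ((a / c1) * (c1 * fst z1 * 1 + c2 * fst z2 * 0), (a / c1) * (c1 * snd z1 * 1 + c2 * snd z2 * 0))"
      using c1 by (simp add: z z1 za0 za1 b0)
    also have "\<dots> = pt1 (c1 * fst z1 * 1 + c2 * fst z2 * 0, c1 * snd z1 * 1 + c2 * snd z2 * 0)"
      by (rule pt1_scale) (use a0 c1 in simp)
    finally show ?thesis unfolding Lm_def using PG1_10 by fastforce
  next
    case False
    hence r: "(Dt z1 z3 * Dt z2 z) / (Dt z2 z3 * Dt z1 z) \<in> Fq q" using h by simp
    define rr where "rr = (Dt z1 z3 * Dt z2 z) / (Dt z2 z3 * Dt z1 z)"
    have bn: "b \<noteq> 0" using False d12 by (simp add: b_def)
    have d23: "Dt z2 z3 \<noteq> 0" using d32 by (simp add: Dt_def z2 z3 algebra_simps)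
    have sw1: "Dt z3 z2 = - Dt z2 z3" and sw2: "Dt z2 z = - Dt z z2"
      by (simp_all add: Dt_def algebra_simps)
    have key: "b * c1 * rr = a * c2"
      using d12 d13 d32 d23 False unfolding a_def b_def rr_def c1_def c2_def sw1 sw2
      by (simp add: field_simps)
    have e0: "x0 = (b / c2) * (c1 * fst z1 * rr + c2 * fst z2 * 1)"
      and e1: "x1 = (b / c2) * (c1 * snd z1 * rr + c2 * snd z2 * 1)"
    proof -
      have "(b / c2) * (c1 * fst z1 * rr + c2 * fst z2 * 1) = (b * c1 * rr) / c2 * a0 + b * b0"
        using c2 by (simp add: z1 z2 field_simps)
      thus "x0 = (b / c2) * (c1 * fst z1 * rr + c2 * fst z2 * 1)" using key c2 za0 by simp
      have "(b / c2) * (c1 * snd z1 * rr + c2 * snd z2 * 1) = (b * c1 * rr) / c2 * a1 + b * b1"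
        using c2 by (simp add: z1 z2 field_simps)
      thus "x1 = (b / c2) * (c1 * snd z1 * rr + c2 * snd z2 * 1)" using key c2 za1 by simp
    qed
    have "pt1 z = pt1 ((b / c2) * (c1 * fst z1 * rr + c2 * fst z2 * 1), (b / c2) * (c1 * snd z1 * rr + c2 * snd z2 * 1))"
      using e0 e1 z by simp
    also have "\<dots> = pt1 (c1 * fst z1 * rr + c2 * fst z2 * 1, c1 * snd z1 * rr + c2 * snd z2 * 1)"
      by (rule pt1_scale) (use bn c2 in simp)
    finally show ?thesis unfolding Lm_def using PG1_r1[of rr] r rr_def by fastforce
  qed
qed

end

lemma norm_eq:
  fixes z z' :: "'a::field \<times> 'a"
  assumes "z = (0, 1) \<or> fst z = 1" "z' = (0, 1) \<or> fst z' = 1" "Dt z z' = 0"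
  shows "z = z'"
  using assms by (cases z; cases z') (auto simp: Dt_def)

locale tc = frob q sg for q :: nat and sg :: "'a::field \<Rightarrow> 'a" +
  fixes e0 e1 e2 e3 :: "nat \<Rightarrow> 'a"
  assumes indep: "\<And>c0 c1 c2 c3. c0 \<in> Fq q \<Longrightarrow> c1 \<in> Fq q \<Longrightarrow> c2 \<in> Fq q \<Longrightarrow> c3 \<in> Fq q \<Longrightarrow>
     (\<forall>i. c0 * e0 i + c1 * e1 i + c2 * e2 i + c3 * e3 i = 0) \<Longrightarrow> c0 = 0 \<and> c1 = 0 \<and> c2 = 0 \<and> c3 = 0"
begin

definition W :: "'a \<Rightarrow> 'a \<Rightarrow> nat \<Rightarrow> 'a" where
  "W s t = (\<lambda>i. s^3 * e0 i + s^2 * t * e1 i + s * t^2 * e2 i + t^3 * e3 i)"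

lemma W_zero:
  assumes "s \<in> Fq q" "t \<in> Fq q" "W s t = (\<lambda>i. 0)"
  shows "s = 0 \<and> t = 0"
proof -
  have "\<forall>i. s^3 * e0 i + (s^2 * t) * e1 i + (s * t^2) * e2 i + t^3 * e3 i = 0"
    using assms(3) unfolding W_def by (metis mult.assoc)
  moreover have "s^3 \<in> Fq q" "s^2 * t \<in> Fq q" "s * t^2 \<in> Fq q" "t^3 \<in> Fq q"
    using assms(1,2) by (simp_all add: Fq_pow Fq_mult)
  ultimately have "s^3 = 0 \<and> s^2 * t = 0 \<and> s * t^2 = 0 \<and> t^3 = 0"
    by (intro indep[rotated 4])
  thus ?thesis by simp
qed

lemma W_prop:
  assumes "s \<in> Fq q" "t \<in> Fq q" "s' \<in> Fq q" "t' \<in> Fq q" "l \<in> Fq q"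
    and eq: "W s t = (\<lambda>i. l * W s' t' i)"
  shows "s * t' - s' * t = 0"
proof -
  have "\<forall>i. (s^3 - l * s'^3) * e0 i + (s^2 * t - l * (s'^2 * t')) * e1 i
     + (s * t^2 - l * (s' * t'^2)) * e2 i + (t^3 - l * t'^3) * e3 i = 0"
  proof
    fix i
    have "W s t i = l * W s' t' i" using eq by metis
    thus "(s^3 - l * s'^3) * e0 i + (s^2 * t - l * (s'^2 * t')) * e1 i
     + (s * t^2 - l * (s' * t'^2)) * e2 i + (t^3 - l * t'^3) * e3 i = 0"
      unfolding W_def by (simp add: algebra_simps)
  qed
  moreover have f1: "s^3 - l * s'^3 \<in> Fq q"
    using assms(1-5) by (simp add: Fq_diff Fq_mult Fq_pow)
  moreover have f2: "s^2 * t - l * (s'^2 * t') \<in> Fq q"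
    using assms(1-5) by (simp add: Fq_diff Fq_mult Fq_pow)
  moreover have f3: "s * t^2 - l * (s' * t'^2) \<in> Fq q"
    using assms(1-5) by (simp add: Fq_diff Fq_mult Fq_pow)
  moreover have f4: "t^3 - l * t'^3 \<in> Fq q"
    using assms(1-5) by (simp add: Fq_diff Fq_mult Fq_pow)
  ultimately have "s^3 - l * s'^3 = 0 \<and> s^2 * t - l * (s'^2 * t') = 0 \<and>
     s * t^2 - l * (s' * t'^2) = 0 \<and> t^3 - l * t'^3 = 0"
    by (rule indep[rotated 4])
  hence h: "s^3 = l * s'^3" "s^2 * t = l * (s'^2 * t')" "s * t^2 = l * (s' * t'^2)"
     "t^3 = l * t'^3" by simp_all
  have "(s * t' - s' * t)^3 = s^3 * t'^3 - 3 * (s^2 * t) * (s' * t'^2) + 3 * (s * t^2) * (s'^2 * t')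
      - t^3 * s'^3"
    by (simp add: power3_eq_cube power2_eq_square algebra_simps)
  also have "\<dots> = 0" unfolding h by (simp add: power3_eq_cube power2_eq_square algebra_simps)
  finally show ?thesis by simp
qed

lemma W_scale: "W (c * s) (c * t) = (\<lambda>i. c^3 * W s t i)"
  unfolding W_def by (simp add: power_mult_distrib algebra_simps power2_eq_square power3_eq_cube)

end

context tc
begin

lemma lagr:
  fixes t u :: 'a
  shows "(-((t-1)*(u-1)*(t-u))) * W 1 0 k + (-(t*u*(t-1)*(u-1)*(t-u))) * W 0 1 k + (t*u*(t-u)) * W 1 1 k
     + (u*(u-1)) * W 1 t k + (-(t*(t-1))) * W 1 u k = 0"
  unfolding W_def by (simp add: algebra_simps power2_eq_square power3_eq_cube)

end

theorem mainTheorem4: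
  fixes q :: nat and C :: "(nat \<Rightarrow> 'a::{field,finite}) set set"
  assumes "\<exists>p k. prime p \<and> k > 0 \<and> q = p ^ k"
    and "card (UNIV :: 'a set) = q ^ 3"
    and "q \<ge> 4"
    and "twisted_cubic q C"
    and "C \<subseteq> O1 q"
  shows "\<exists>L. subline q L \<and> C = theta q ` L"
proof -
  obtain p k where pk: "prime p" "k > 0" "q = p ^ k" using assms(1) by blast
  have card: "card (UNIV :: 'a set) = q^3" by (rule assms(2))
  have qpos: "q > 0" using assms(3) by simp
  have x3: "((x^q)^q)^q = x" for x :: 'a
  proof -
    have "((x^q)^q)^q = x ^ (q^3)" by (simp add: power3_eq_cube flip: power_mult)
    thus ?thesis using field_power_card_same[of x] card by simp
  qed
  interpret frob q "\<lambda>x::'a. x^q"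
    by standard (auto simp: frob_add[OF pk card] x3 qpos)
  obtain e0 e1 e2 e3 where e: "e0 \<in> U1 q" "e1 \<in> U1 q" "e2 \<in> U1 q" "e3 \<in> U1 q"
    and ind: "\<forall>c0 c1 c2 c3. c0 \<in> Fq q \<and> c1 \<in> Fq q \<and> c2 \<in> Fq q \<and> c3 \<in> Fq q \<and>
          (\<forall>i. c0 * e0 i + c1 * e1 i + c2 * e2 i + c3 * e3 i = 0)
          \<longrightarrow> c0 = 0 \<and> c1 = 0 \<and> c2 = 0 \<and> c3 = 0"
    and Ceq: "C = {pt q (\<lambda>i. s^3 * e0 i + s^2 * t * e1 i + s * t^2 * e2 i + t^3 * e3 i) | s t.
             s \<in> Fq q \<and> t \<in> Fq q \<and> (s, t) \<noteq> (0, 0)}"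
    using assms(4) unfolding twisted_cubic_def by blast
  interpret tc q "\<lambda>x::'a. x^q" e0 e1 e2 e3
    by standard (use ind in blast)
  have Cdef: "C = {pt q (W s t) | s t. s \<in> Fq q \<and> t \<in> Fq q \<and> (s, t) \<noteq> (0, 0)}"
    unfolding Ceq W_def ..
  define T where "T = {(s, t). s \<in> Fq q \<and> t \<in> Fq q \<and> (s, t) \<noteq> ((0::'a), (0::'a))}"
  have pO: "\<forall>pp \<in> T. \<exists>zl. (fst zl = (0, 1) \<or> fst (fst zl) = 1) \<and> snd zl \<in> Fq q \<and> snd zl \<noteq> 0
      \<and> W (fst pp) (snd pp) = (\<lambda>i. snd zl * Vh q (fst zl) i)"
  proof
    fix pp assume "pp \<in> T"
    then obtain s t where pp: "pp = (s, t)" and st: "s \<in> Fq q" "t \<in> Fq q" "(s, t) \<noteq> (0, 0)"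
      unfolding T_def by auto
    have "pt q (W s t) \<in> C" unfolding Cdef using st by blast
    hence "pt q (W s t) \<in> O1 q" using assms(5) by blast
    then obtain z where z: "z = (0, 1) \<or> fst z = (1::'a)" and zeq: "pt q (W s t) = pt q (Vh q z)"
      unfolding O1_def using Ppt_Vh1 Ppt_Vh0 by (smt (verit) Un_iff fst_conv mem_Collect_eq singletonD)
    obtain l where l: "l \<in> Fq q" "W s t = (\<lambda>i. l * Vh q z i)" using pt_eqD[OF zeq] by blast
    have "l \<noteq> 0"
    proof
      assume "l = 0"
      hence "W s t = (\<lambda>i. 0)" using l by simp
      thus False using W_zero st by blast
    qed
    thus "\<exists>zl. (fst zl = (0, 1) \<or> fst (fst zl) = 1) \<and> snd zl \<in> Fq q \<and> snd zl \<noteq> 0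
      \<and> W (fst pp) (snd pp) = (\<lambda>i. snd zl * Vh q (fst zl) i)"
      using z l pp by (intro exI[of _ "(z, l)"]) simp
  qed
  then obtain zlf where zlf: "\<And>pp. pp \<in> T \<Longrightarrow> (fst (zlf pp) = (0, 1) \<or> fst (fst (zlf pp)) = 1) \<and>
      snd (zlf pp) \<in> Fq q \<and> snd (zlf pp) \<noteq> 0
      \<and> W (fst pp) (snd pp) = (\<lambda>i. snd (zlf pp) * Vh q (fst (zlf pp)) i)"
    by metis
  define zf where "zf pp = fst (zlf pp)" for pp
  define lf where "lf pp = snd (zlf pp)" for pp
  have zn: "\<And>pp. pp \<in> T \<Longrightarrow> zf pp = (0, 1) \<or> fst (zf pp) = 1"
    and lF: "\<And>pp. pp \<in> T \<Longrightarrow> lf pp \<in> Fq q"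
    and ln: "\<And>pp. pp \<in> T \<Longrightarrow> lf pp \<noteq> 0"
    and Wz: "\<And>pp. pp \<in> T \<Longrightarrow> W (fst pp) (snd pp) = (\<lambda>i. lf pp * Vh q (zf pp) i)"
    using zlf unfolding zf_def lf_def by blast+
  have distD: "Dt (zf pp) (zf pp') \<noteq> 0"
    if "pp \<in> T" "pp' \<in> T" "fst pp * snd pp' - fst pp' * snd pp \<noteq> 0" for pp pp'
  proof
    assume "Dt (zf pp) (zf pp') = 0"
    hence eqz: "zf pp = zf pp'" using norm_eq zn that by blast
    have "W (fst pp) (snd pp) = (\<lambda>i. (lf pp / lf pp') * W (fst pp') (snd pp') i)"
      using Wz[OF that(1)] Wz[OF that(2)] eqz ln[OF that(2)] by (simp add: fun_eq_iff)
    moreover have "lf pp / lf pp' \<in> Fq q" using lF that Fq_div by blast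
    ultimately have "fst pp * snd pp' - fst pp' * snd pp = 0"
      using W_prop that(1,2) unfolding T_def by auto
    thus False using that(3) by simp
  qed
  have T1: "((1::'a), (0::'a)) \<in> T" "((0::'a), (1::'a)) \<in> T" "((1::'a), (1::'a)) \<in> T"
    by (simp_all add: T_def)
  define z1 where "z1 = zf (1, 0)"
  define z2 where "z2 = zf (0, 1)"
  define z3 where "z3 = zf (1, 1)"
  have d12: "Dt z1 z2 \<noteq> 0" using distD[OF T1(1) T1(2)] unfolding z1_def z2_def by simp
  have d13: "Dt z1 z3 \<noteq> 0" using distD[OF T1(1) T1(3)] unfolding z1_def z3_def by simp
  have d32: "Dt z3 z2 \<noteq> 0" using distD[OF T1(3) T1(2)] unfolding z3_def z2_def by simp
  have d23: "Dt z2 z3 \<noteq> 0" using distD[OF T1(2) T1(3)] unfolding z3_def z2_def by simp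
  define c1 where "c1 = Dt z3 z2 / Dt z1 z2"
  define c2 where "c2 = Dt z1 z3 / Dt z1 z2"
  have c1n: "c1 \<noteq> 0" and c2n: "c2 \<noteq> 0" using d12 d13 d32 by (simp_all add: c1_def c2_def)
  define L where "L = Lm (c1 * fst z1) (c2 * fst z2) (c1 * snd z1) (c2 * snd z2)"
  have subL: "subline q L" unfolding L_def
  proof (rule subline_Lm)
    have "c1 * fst z1 * (c2 * snd z2) - c2 * fst z2 * (c1 * snd z1) = c1 * c2 * Dt z1 z2"
      by (simp add: Dt_def algebra_simps)
    thus "c1 * fst z1 * (c2 * snd z2) - c2 * fst z2 * (c1 * snd z1) \<noteq> 0" using c1n c2n d12 by simp
  qed
  have zne: "zf pp \<noteq> (0, 0)" if "pp \<in> T" for pp using zn[OF that] by auto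
  have inL': "pt1 (zf pp) \<in> L"
    if "pp \<in> T" "Dt z1 (zf pp) = 0 \<or> (Dt z1 z3 * Dt z2 (zf pp)) / (Dt z2 z3 * Dt z1 (zf pp)) \<in> Fq q" for pp
    using inL[OF d12 d13 d32 zne[OF that(1)] that(2)] unfolding L_def c1_def c2_def .
  define S where "S = (\<lambda>t. ((1::'a), t)) ` Fq q \<union> {((0::'a), (1::'a))}"
  have ST: "S \<subseteq> T" unfolding S_def T_def by auto
  have c4: "4 \<le> card (Fq q :: 'a set)" using card_Fq_ge[OF card] assms(3) by simp
  have memb: "pt1 (zf pp) \<in> L" if pS: "pp \<in> S" for pp
  proof -
    have ppT: "pp \<in> T" using pS ST by blast
    consider "pp = (0, 1)" | t where "pp = (1, t)" "t \<in> Fq q" using pS unfolding S_def by blast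
    thus ?thesis
    proof cases
      case 1
      show ?thesis by (rule inL'[OF ppT]) (simp add: 1 z2_def[symmetric])
    next
      case 2
      note t = 2
      show ?thesis
      proof (cases "t = 0 \<or> t = 1")
        case True
        thus ?thesis
        proof
          assume "t = 0"
          thus ?thesis by (intro inL'[OF ppT]) (simp add: t z1_def[symmetric])
        next
          assume "t = 1"
          thus ?thesis using d13 d23 by (intro inL'[OF ppT]) (simp add: t z3_def[symmetric] mult.commute)
        qed
      next
        case False
        have "\<not> Fq q \<subseteq> {0, 1, t}"
        proof
          assume "Fq q \<subseteq> {0, 1, t}"
          hence "card (Fq q :: 'a set) \<le> card {0::'a, 1, t}" by (rule card_mono[rotated]) simp
          also have "\<dots> \<le> 3" by (simp add: card_insert_if)
          finally show False using c4 by simp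
        qed
        then obtain u where u: "u \<in> Fq q" "u \<noteq> 0" "u \<noteq> 1" "u \<noteq> t" by blast
        have T4: "((1::'a), t) \<in> T" and T5: "((1::'a), u) \<in> T" using t u by (simp_all add: T_def)
        define z4 where "z4 = zf (1, t)"
        define z5 where "z5 = zf (1, u)"
        have wz: "W (fst pp) (snd pp) k = lf pp * Vh q (zf pp) k" if "pp \<in> T" for pp k
          using fun_cong[OF Wz[OF that], of k] by simp
        have rel: "(-((t-1)*(u-1)*(t-u)) * lf (1,0)) * Vh q z1 k
           + (-(t*u*(t-1)*(u-1)*(t-u)) * lf (0,1)) * Vh q z2 k + ((t*u*(t-u)) * lf (1,1)) * Vh q z3 k
           + ((u*(u-1)) * lf (1,t)) * Vh q z4 k + ((-(t*(t-1))) * lf (1,u)) * Vh q z5 k = 0" for k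
        proof -
          have "(-((t-1)*(u-1)*(t-u))) * (lf (1,0) * Vh q z1 k)
           + (-(t*u*(t-1)*(u-1)*(t-u))) * (lf (0,1) * Vh q z2 k) + (t*u*(t-u)) * (lf (1,1) * Vh q z3 k)
           + (u*(u-1)) * (lf (1,t) * Vh q z4 k) + (-(t*(t-1))) * (lf (1,u) * Vh q z5 k) = 0"
            using lagr[of t u k] wz[OF T1(1), of k] wz[OF T1(2), of k] wz[OF T1(3), of k]
              wz[OF T4, of k] wz[OF T5, of k]
            unfolding z1_def z2_def z3_def z4_def z5_def by simp
          thus ?thesis by (simp only: mult.assoc)
        qed
        have tn: "t \<noteq> 0" "t \<noteq> 1" using False by auto
        have l3: "(t*u*(t-u)) * lf (1,1) \<noteq> 0" using tn u ln[OF T1(3)] by simp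
        have d53: "Dt z5 z3 \<noteq> 0" using distD[OF T5 T1(3)] u unfolding z5_def z3_def by simp
        have d14: "Dt z1 z4 \<noteq> 0" using distD[OF T1(1) T4] tn unfolding z1_def z4_def by simp
        have "(Dt z1 z3 * Dt z2 z4) / (Dt z2 z3 * Dt z1 z4) \<in> Fq q"
          by (rule cr_lemma[OF rel l3 d53 d23 d14])
        thus ?thesis by (intro inL'[OF ppT]) (simp add: t z4_def)
      qed
    qed
  qed
  have finS: "finite S" unfolding S_def by simp
  define g where "g pp = pt q (W (fst pp) (snd pp))" for pp
  have CS: "C = g ` S"
  proof
    show "C \<subseteq> g ` S"
    proof
      fix X assume "X \<in> C"
      then obtain s t where X: "X = pt q (W s t)" and st: "s \<in> Fq q" "t \<in> Fq q" "(s,t) \<noteq> (0,0)"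
        unfolding Cdef by blast
      show "X \<in> g ` S"
      proof (cases "s = 0")
        case True
        hence t0: "t \<noteq> 0" using st by simp
        have "W s t = (\<lambda>i. t^3 * W 0 1 i)" using W_scale[of t 0 1] True by simp
        hence "X = pt q (W 0 1)" using X pt_scale[of "t^3" "W 0 1"] Fq_pow[OF st(2)] t0 by simp
        thus ?thesis unfolding g_def S_def by force
      next
        case False
        have "W s t = (\<lambda>i. s^3 * W 1 (t/s) i)" using W_scale[of s 1 "t/s"] False by simp
        hence "X = pt q (W 1 (t/s))" using X pt_scale[of "s^3" "W 1 (t/s)"] Fq_pow[OF st(1)] False by simp
        moreover have "t/s \<in> Fq q" using st Fq_div by blast
        ultimately show ?thesis unfolding g_def S_def by force
      qed
    qed
    show "g ` S \<subseteq> C"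
    proof
      fix X assume "X \<in> g ` S"
      then obtain pp where "pp \<in> S" "X = g pp" by blast
      hence "pp \<in> T" "X = pt q (W (fst pp) (snd pp))" using ST unfolding g_def by auto
      thus "X \<in> C" unfolding Cdef T_def by (cases pp) auto
    qed
  qed
  have inj: "inj_on g S"
  proof (rule inj_onI)
    fix x y assume xy: "x \<in> S" "y \<in> S" "g x = g y"
    obtain l where l: "l \<in> Fq q" "W (fst x) (snd x) = (\<lambda>i. l * W (fst y) (snd y) i)"
      using pt_eqD[OF xy(3)[unfolded g_def]] by blast
    have "x \<in> T" "y \<in> T" using xy ST by auto
    hence "fst x * snd y - fst y * snd x = 0" using W_prop[OF _ _ _ _ l(1) l(2)] unfolding T_def by auto
    thus "x = y" using xy(1,2) unfolding S_def by auto
  qed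
  have sub: "C \<subseteq> theta q ` L"
  proof
    fix X assume "X \<in> C"
    then obtain pp where pp: "pp \<in> S" "X = g pp" using CS by blast
    have ppT: "pp \<in> T" using pp ST by blast
    have "theta q (pt1 (zf pp)) = pt q (Vh q (zf pp))" by (rule theta_Vh[OF zn[OF ppT]])
    also have "\<dots> = pt q (\<lambda>i. lf pp * Vh q (zf pp) i)" by (rule pt_scale[symmetric, OF lF[OF ppT] ln[OF ppT]])
    also have "\<dots> = X" using pp Wz[OF ppT] unfolding g_def by simp
    finally show "X \<in> theta q ` L" using memb[OF pp(1)] by force
  qed
  define h where "h v = pt1 (c1 * fst z1 * fst v + c2 * fst z2 * snd v, c1 * snd z1 * fst v + c2 * snd z2 * snd v)"
    for v :: "'a \<times> 'a"
  have Lsub: "L \<subseteq> h ` S"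
  proof
    fix X assume "X \<in> L"
    then obtain x y where X: "X = pt1 (c1 * fst z1 * x + c2 * fst z2 * y, c1 * snd z1 * x + c2 * snd z2 * y)"
      and xy: "pt1 (x, y) \<in> PG1_q q" "(x, y) \<noteq> (0, 0)" unfolding L_def Lm_def by blast
    have "(x,y) \<in> pt1 (x,y)" by (rule pt1_self)
    then consider tt where "tt \<in> Fq q" "(x, y) \<in> pt1 (1, tt)" | "(x,y) \<in> pt1 (0,1)"
      using xy(1) unfolding PG1_q_def by auto
    thus "X \<in> h ` S"
    proof cases
      case 1
      then obtain m where m: "x = m * 1" "y = m * tt" unfolding pt1_def by auto
      have mn: "m \<noteq> 0" using m xy(2) by auto
      have "X = pt1 (m * (c1 * fst z1 * 1 + c2 * fst z2 * tt), m * (c1 * snd z1 * 1 + c2 * snd z2 * tt))"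
        unfolding X m by (simp add: algebra_simps)
      also have "\<dots> = h (1, tt)" unfolding h_def by (simp add: pt1_scale[OF mn])
      finally show ?thesis unfolding S_def using 1 by blast
    next
      case 2
      then obtain m where m: "x = m * 0" "y = m * 1" unfolding pt1_def by auto
      have mn: "m \<noteq> 0" using m xy(2) by auto
      have "X = pt1 (m * (c1 * fst z1 * 0 + c2 * fst z2 * 1), m * (c1 * snd z1 * 0 + c2 * snd z2 * 1))"
        unfolding X m by (simp add: algebra_simps)
      also have "\<dots> = h (0, 1)" unfolding h_def by (simp add: pt1_scale[OF mn])
      finally show ?thesis unfolding S_def by blast
    qed
  qed
  have finL: "finite L" using Lsub finS finite_subset by blast
  have finTL: "finite (theta q ` L)" using finL by simp
  have "card (theta q ` L) \<le> card L" by (rule card_image_le[OF finL])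
  also have "card L \<le> card (h ` S)" by (rule card_mono) (use finS Lsub in auto)
  also have "\<dots> \<le> card S" by (rule card_image_le[OF finS])
  also have "card S = card C" using CS card_image[OF inj] by simp
  finally have "card (theta q ` L) \<le> card C" .
  hence "C = theta q ` L" using card_seteq[OF finTL sub] by blast
  thus ?thesis using subL by blast
qed

end
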